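(* Let $n\ge3$ and $\omega\ge\lfloor 3n/4\rfloor$ be integers. Then the sequences in the set $\{\mathbf{s}_n\in\mathcal{R}(n,\lceil n/2\rceil): add(\mathbf{s}_n)=\omega-\lceil n/2\rceil\}$ are pairwise shift inequivalent, i.e. no two distinct elements of this set are circular shifts of one another.
   Context: All sequences are binary (entries in $\mathbb{Z}_2$), $\overline{x}=x\oplus1$, $x\bmod d$ is the least nonnegative residue, and $\mathbf{a}^q$ is the concatenation of $q$ copies of $\mathbf a$. For $\mathbf{s}_n=(s_0,\dots,s_{n-1})$, $\mathbf{s}_j=(s_0,\dots,s_{j-1})$. A length-$m$ sequence is periodic if it is the concatenation of $m/e$ copies of a length-$e$ sequence for a proper divisor $e$ of $m$, aperiodic otherwise. Right circular shift: $R^k(\mathbf{s}_n)=(s_{n-k},\dots,s_{n-1},s_0,\dots,s_{n-k-1})$, $0\le k<n$. For $c\ge\lfloor n/2\rfloor$ and $1\le d\le\min\{n-c,\lfloor n/2\rfloor\}$, $\mathcal{B}(n,c,d)$ is the set of aperiodic length-$n$ sequences $\mathbf{s}_n$ with $\mathbf{s}_d$ aperiodic and $\mathbf{s}_{c+d}=(s_0,\dots,s_{d-1})^q(s_0,\dots,s_{r-1},\overline{s_r})$, where $q=\lfloor(c+d-1)/d\rfloor$, $r=c+d-1-qd$, and $s_{c+d},\dots,s_{n-1}$ are arbitrary. $\mathcal{B}(n,c)=\bigcup_{d=1}^{\min\{n-c,\lfloor n/2\rfloor\}}\mathcal{B}(n,c,d)$. For $\mathbf{s}_n\in\mathcal{B}(n,c,d)$,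 $add(\mathbf{s}_n)$ is the integer $t\ge0$ such that $s_{n-1-i}=s_{(d-1-i)\bmod d}$ for $0\le i<t$ and $s_{n-1-t}\neq s_{(d-1-t)\bmod d}$. For $\mathbf{s}_n\in\mathcal{B}(n,c)$, $E(\mathbf{s}_n)=\{R^k(\mathbf{s}_n):0\le k<n\}\cap\mathcal{B}(n,c)$, and $\mathcal{R}(n,c)$ is the set of all $\mathbf{s}\in\mathcal{B}(n,c)$ with $add(\mathbf{s})\ge add(\mathbf a)$ for every $\mathbf a\in E(\mathbf s)$. *)

theory Defs
  imports Main
begin

text \<open>Binary sequences are modelled as lists of booleans (True = 1, False = 0);
  complement is negation.\<close>

definition periodic :: "bool list \<Rightarrow> bool" where
  "periodic s \<longleftrightarrow> (\<exists>e. 0 < e \<and> e < length s \<and> e dvd length s \<and>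
      s = concat (replicate (length s div e) (take e s)))"

definition aperiodic :: "bool list \<Rightarrow> bool" where
  "aperiodic s \<longleftrightarrow> \<not> periodic s"

definition rshift :: "nat \<Rightarrow> bool list \<Rightarrow> bool list" where
  "rshift k s = drop (length s - k) s @ take (length s - k) s"

definition Bd :: "nat \<Rightarrow> nat \<Rightarrow> nat \<Rightarrow> bool list set" where
  "Bd n c d = {s. length s = n \<and> aperiodic s \<and> aperiodic (take d s) \<and>
      (let q = (c + d - 1) div d; r = c + d - 1 - q * d in
        take (c + d) s = concat (replicate q (take d s)) @ take r s @ [\<not> s ! r])}"

definition drange :: "nat \<Rightarrow> nat \<Rightarrow> nat set" where
  "drange n c = {d. 1 \<le> d \<and> d \<le> min (n - c) (n div 2)}"

definition Bc :: "nat \<Rightarrow> nat \<Rightarrow> bool list set" where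
  "Bc n c = (\<Union>d\<in>drange n c. Bd n c d)"

definition add_d :: "nat \<Rightarrow> bool list \<Rightarrow> nat" where
  "add_d d s = (LEAST t. t < length s \<and>
      s ! (length s - 1 - t) \<noteq> s ! nat ((int d - 1 - int t) mod int d))"

text \<open>add of a sequence in B(n,c): d is the (unique) index with s in B(n,c,d).\<close>
definition add :: "nat \<Rightarrow> nat \<Rightarrow> bool list \<Rightarrow> nat" where
  "add n c s = add_d (THE d. d \<in> drange n c \<and> s \<in> Bd n c d) s"

definition Eq :: "nat \<Rightarrow> nat \<Rightarrow> bool list \<Rightarrow> bool list set" where
  "Eq n c s = {rshift k s | k. k < n} \<inter> Bc n c"

definition Rset :: "nat \<Rightarrow> nat \<Rightarrow> bool list set" where
  "Rset n c = {s \<in> Bc n c. \<forall>a\<in>Eq n c s. add n c a \<le> add n c s}"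

end

theory Submission
  imports Defs
begin


lemma period_dvd_aux:
  fixes x :: "int \<Rightarrow> 'a" and p a b i :: int
  assumes per: "\<forall>i. a \<le> i \<longrightarrow> i + p < b \<longrightarrow> x i = x (i + p)"
    and "a \<le> i" "i + int l * p < b" "0 < p"
  shows "x i = x (i + int l * p)"
  using assms(3)
proof (induction l)
  case 0 then show ?case by simp
next
  case (Suc l)
  have h1: "i + int l * p < b" using Suc.prems \<open>0 < p\<close> by (simp add: algebra_simps)
  have "x i = x (i + int l * p)" using Suc.IH h1 by simp
  also have "\<dots> = x (i + int l * p + p)"
  proof -
    have "0 \<le> int l * p" using \<open>0 < p\<close> by simp
    then have "a \<le> i + int l * p" using \<open>a \<le> i\<close> by linarith
    moreover have "i + int l * p + p < b" using Suc.prems by (simp add: algebra_simps)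
    ultimately show ?thesis using per by blast
  qed
  finally show ?case by (simp add: algebra_simps)
qed

lemma period_dvd:
  fixes x :: "int \<Rightarrow> 'a" and p a b i j :: int
  assumes per: "\<forall>i. a \<le> i \<longrightarrow> i + p < b \<longrightarrow> x i = x (i + p)"
    and "0 < p" "a \<le> i" "i < b" "a \<le> j" "j < b" "p dvd (j - i)"
  shows "x i = x j"
proof -
  have main: "x u = x v" if M: "a \<le> u" "u \<le> v" "v < b" "p dvd (v - u)" for u v
  proof -
    obtain l where l: "v - u = p * l" using M(4) by (auto elim: dvdE)
    have "0 \<le> p * l" using l M(2) by simp
    then have "l \<ge> 0" using \<open>0 < p\<close> by (simp add: zero_le_mult_iff)
    then obtain l' where "l = int l'" by (metis nonneg_eq_int)
    then have "v = u + int l' * p" using l by (simp add: algebra_simps)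
    then show ?thesis using period_dvd_aux[OF per M(1), of l'] M \<open>0 < p\<close> by simp
  qed
  show ?thesis
  proof (cases "i \<le> j")
    case True then show ?thesis using main assms by auto
  next
    case False
    have "p dvd (i - j)" using assms(7) by (metis dvd_diff_commute)
    then show ?thesis using main[of j i] assms False by auto
  qed
qed

lemma fine_wilf_aux:
  fixes x :: "int \<Rightarrow> 'a" and p q a b i j :: int
  assumes "0 < p" "0 < q" "p + q - gcd p q \<le> b - a"
    "\<forall>i. a \<le> i \<longrightarrow> i + p < b \<longrightarrow> x i = x (i + p)"
    "\<forall>i. a \<le> i \<longrightarrow> i + q < b \<longrightarrow> x i = x (i + q)"
    "a \<le> i" "i < b" "a \<le> j" "j < b" "gcd p q dvd (j - i)"
  shows "x i = x j"
  using assms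
proof (induction "nat (p + q)" arbitrary: p q a b i j rule: less_induct)
  case less
  define N where "N = nat (p + q)"
  note hyps' = less.hyps[folded N_def]
  have sym: "x i = x j"
    if "p < q" and H: "nat (p + q) = N" "0 < p" "0 < q" "p + q - gcd p q \<le> b - a"
      "\<forall>i. a \<le> i \<longrightarrow> i + p < b \<longrightarrow> x i = x (i + p)"
      "\<forall>i. a \<le> i \<longrightarrow> i + q < b \<longrightarrow> x i = x (i + q)"
      "a \<le> i" "i < b" "a \<le> j" "j < b" "gcd p q dvd (j - i)" for p q a b i j
  proof -
    define g where "g = gcd p q"
    have gpos: "0 < g" using H(2) g_def by simp
    have gq: "g dvd q - p" using g_def by simp
    have "q - p \<ge> g" using gq \<open>p < q\<close> by (simp add: zdvd_imp_le)
    have g2: "gcd p (q - p) = g"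
    proof -
      have "gcd p (q - p) = gcd (q - p) p" by (rule gcd.commute)
      also have "\<dots> = gcd q p" by (rule gcd_diff1)
      also have "\<dots> = g" unfolding g_def by (rule gcd.commute)
      finally show ?thesis .
    qed
    have len: "2 * p \<le> b - a" using H(4) \<open>q - p \<ge> g\<close> g_def by linarith
    have perq': "\<forall>i. a \<le> i \<longrightarrow> i + (q - p) < b - p \<longrightarrow> x i = x (i + (q - p))"
    proof (intro allI impI)
      fix i assume "a \<le> i" "i + (q - p) < b - p"
      have "i + q < b" using \<open>i + (q - p) < b - p\<close> by simp
      then have "x i = x (i + q)" using H(6) \<open>a \<le> i\<close> by blast
      moreover have "a \<le> i + (q - p)" using \<open>a \<le> i\<close> \<open>p < q\<close> by simp
      moreover have "i + (q - p) + p < b" using \<open>i + (q - p) < b - p\<close> by simp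
      ultimately have "x (i + (q - p)) = x (i + (q - p) + p)" using H(5) by blast
      then show "x i = x (i + (q - p))" using \<open>x i = x (i + q)\<close> by simp
    qed
    have perp': "\<forall>i. a \<le> i \<longrightarrow> i + p < b - p \<longrightarrow> x i = x (i + p)"
    proof (intro allI impI)
      fix i assume "a \<le> i" "i + p < b - p"
      then have "i + p < b" using H(2) by simp
      then show "x i = x (i + p)" using H(5) \<open>a \<le> i\<close> by blast
    qed
    have lt: "nat (p + (q - p)) < N" using H(1) H(2) H(3) by simp
    have qp: "0 < q - p" using \<open>p < q\<close> by simp
    have len': "p + (q - p) - gcd p (q - p) \<le> b - p - a" using H(4) g2 g_def by simp
    have IH: "x u = x v" if U: "a \<le> u" "u < b - p" "a \<le> v" "v < b - p" "g dvd (v - u)" for u v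
      by (rule hyps'[OF lt H(2) qp len' perp' perq' U(1) U(2) U(3) U(4)])
        (simp add: g2 U(5))
    define i' where "i' = a + (i - a) mod p"
    define j' where "j' = a + (j - a) mod p"
    have i'b: "a \<le> i'" "i' < a + p" "i' \<le> i"
    proof -
      have "(i - a) mod p \<le> i - a" using H(7) by (intro zmod_le_nonneg_dividend) simp
      then show "a \<le> i'" "i' < a + p" "i' \<le> i" using H(2) by (auto simp: i'_def)
    qed
    have j'b: "a \<le> j'" "j' < a + p" "j' \<le> j"
    proof -
      have "(j - a) mod p \<le> j - a" using H(9) by (intro zmod_le_nonneg_dividend) simp
      then show "a \<le> j'" "j' < a + p" "j' \<le> j" using H(2) by (auto simp: j'_def)
    qed
    have pi: "p dvd (i - i')"
    proof -
      have "i - i' = (i - a) - (i - a) mod p" by (simp add: i'_def)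
      also have "\<dots> = p * ((i - a) div p)" by (simp add: minus_mod_eq_mult_div)
      finally show ?thesis by simp
    qed
    have pj: "p dvd (j - j')"
    proof -
      have "j - j' = (j - a) - (j - a) mod p" by (simp add: j'_def)
      also have "\<dots> = p * ((j - a) div p)" by (simp add: minus_mod_eq_mult_div)
      finally show ?thesis by simp
    qed
    have xi: "x i' = x i" using period_dvd[OF H(5) H(2), of i' i] i'b pi H(7,8) by simp
    have xj: "x j' = x j" using period_dvd[OF H(5) H(2), of j' j] j'b pj H(9,10) by simp
    have gp: "g dvd p" using g_def by simp
    have "g dvd (j' - i')"
    proof -
      have e: "(j - i) - (j - j') + (i - i') = j' - i'" by simp
      have "g dvd (j - i)" using H(11) g_def by simp
      moreover have "g dvd (j - j')" using pj gp dvd_trans by blast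
      moreover have "g dvd (i - i')" using pi gp dvd_trans by blast
      ultimately have "g dvd ((j - i) - (j - j') + (i - i'))" by (metis dvd_add dvd_diff)
      then show ?thesis by (simp only: e)
    qed
    then have "x i' = x j'" using IH[of i' j'] i'b j'b len by linarith
    then show ?thesis using xi xj by simp
  qed
  show ?case
  proof (cases "p = q")
    case True
    have "p dvd (j - i)" using less.prems(10) True by simp
    then show ?thesis by (rule period_dvd[OF less.prems(4) less.prems(1) less.prems(6-9)])
  next
    case False
    show ?thesis
    proof (cases "p < q")
      case True show ?thesis by (rule sym[OF True N_def[symmetric] less.prems])
    next
      case False
      then have "q < p" using \<open>p \<noteq> q\<close> by simp
      have a1: "nat (q + p) = N" unfolding N_def by (simp add: add.commute)
      have a2: "q + p - gcd q p \<le> b - a" using less.prems(3) by (simp add: gcd.commute add.commute)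
      have a3: "gcd q p dvd (j - i)" using less.prems(10) by (simp add: gcd.commute)
      show ?thesis using sym[OF \<open>q < p\<close> a1 less.prems(2) less.prems(1) a2 less.prems(5) less.prems(4) less.prems(6-9) a3] .
    qed
  qed
qed

lemma fine_wilf:
  fixes x :: "int \<Rightarrow> 'a" and p q a b i j :: int
  assumes "0 < p" "0 < q" "p + q - gcd p q \<le> b - a"
    "\<forall>i. a \<le> i \<longrightarrow> i + p < b \<longrightarrow> x i = x (i + p)"
    "\<forall>i. a \<le> i \<longrightarrow> i + q < b \<longrightarrow> x i = x (i + q)"
    "a \<le> i" "i < b" "a \<le> j" "j < b" "gcd p q dvd (j - i)"
  shows "x i = x j"
  by (rule fine_wilf_aux[OF assms])



lemma coverage:
  fixes n d d' T k :: int
  assumes "3 \<le> n" "1 \<le> d" "d < d'" "2*d' \<le> n" "3*n \<le> 4*T + 7" "T < n" "0 < k" "k < n"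
  shows "d' - 1 \<le> T - k \<or> d - 1 \<le> k - n + T
   \<or> (k \<le> T \<and> n \<le> T + d' \<and> T + d' < n + T \<and> k \<le> T + d \<and> T + d < k + T)
   \<or> (k - n \<le> -1 - d' \<and> -1 - d' < k - n + T \<and> -n \<le> -1 - d' \<and> -1 - d' < -n + T
       \<and> k - n \<le> -1 + d - d' \<and> -1 + d - d' < k - n + T)
   \<or> (n = 3*d + d' \<and> d - 1 < T \<and> 2*d - 1 < T \<and> k \<le> 3*d - 1 \<and> 3*d - 1 < k + T)"
  using assms by smt

lemma core_lt:
  fixes x :: "int \<Rightarrow> 'a" and n d d' T k :: int
  assumes per: "\<forall>i. x (i + n) = x i"
    and n3: "3 \<le> n" and d1: "1 \<le> d" and dd: "d < d'" and dn: "2 * d' \<le> n"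
    and TT: "3 * n \<le> 4 * T + 7" and k0: "0 < k" and kn: "k < n"
    and hP: "\<forall>i. 0 \<le> i \<longrightarrow> i < T \<longrightarrow> x i = x (i + d)"
    and bP1: "x T \<noteq> x (T + d)" and bP2: "x (-1) \<noteq> x (d - 1)"
    and hQ: "\<forall>i. k \<le> i \<longrightarrow> i < k + T \<longrightarrow> x i = x (i + d')"
  shows False
proof -
  have perm: "x (i - n) = x i" for i using per[rule_format, of "i - n"] by simp
  have Tn: "T < n"
  proof (rule ccontr)
    assume "\<not> T < n"
    then have "x (n - 1) = x (n - 1 + d)" using hP n3 by auto
    moreover have "x (n - 1) = x (-1)" using per[rule_format, of "-1"] by simp
    moreover have "x (n - 1 + d) = x (d - 1)" using per[rule_format, of "d - 1"] by (simp add: algebra_simps)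
    ultimately show False using bP2 by simp
  qed
  have P1: "x i = x (i + d)" if "n \<le> i" "i < n + T" for i
  proof -
    have "x (i - n) = x (i - n + d)" using hP that by auto
    then show ?thesis using perm[of i] perm[of "i + d"] by (simp add: algebra_simps)
  qed
  have Pm: "x i = x (i + d)" if "-n \<le> i" "i < -n + T" for i
  proof -
    have "x (i + n) = x (i + n + d)" using hP that by auto
    then show ?thesis using per[rule_format, of i] per[rule_format, of "i + d"] by (simp add: algebra_simps)
  qed
  have Qm: "x i = x (i + d')" if "k - n \<le> i" "i < k - n + T" for i
  proof -
    have "x (i + n) = x (i + n + d')" using hQ that by auto
    then show ?thesis using per[rule_format, of i] per[rule_format, of "i + d'"] by (simp add: algebra_simps)
  qed
  have gpos: "0 < gcd d d'" using d1 by simp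
  have gdvd: "gcd d d' dvd (d' - d)" by simp
  consider (fw1) "d' - 1 \<le> T - k" | (fw2) "d - 1 \<le> k - n + T"
   | (r1b) "k \<le> T \<and> n \<le> T + d' \<and> T + d' < n + T \<and> k \<le> T + d \<and> T + d < k + T"
   | (r2) "k - n \<le> -1 - d' \<and> -1 - d' < k - n + T \<and> -n \<le> -1 - d' \<and> -1 - d' < -n + T
       \<and> k - n \<le> -1 + d - d' \<and> -1 + d - d' < k - n + T"
   | (r5) "n = 3*d + d' \<and> d - 1 < T \<and> 2*d - 1 < T \<and> k \<le> 3*d - 1 \<and> 3*d - 1 < k + T"
    using coverage[OF n3 d1 dd dn TT Tn k0 kn] by blast
  then show False
  proof cases
    case fw1
    have pd: "\<forall>i. k \<le> i \<longrightarrow> i + d < T + d \<longrightarrow> x i = x (i + d)" using hP k0 by auto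
    have pd': "\<forall>i. k \<le> i \<longrightarrow> i + d' < T + d \<longrightarrow> x i = x (i + d')" using hQ dd k0 by auto
    have len: "d + d' - gcd d d' \<le> T + d - k" using fw1 gpos by linarith
    have "x (T + d - d') = x T"
      using fine_wilf[OF _ _ len pd pd', of "T + d - d'" T] d1 dd fw1 gdvd by auto
    moreover have "x (T + d - d') = x (T + d)" using hQ[rule_format, of "T + d - d'"] fw1 dd k0 d1 by auto
    ultimately show False using bP1 by simp
  next
    case fw2
    define w where "w = min (T + d) (k - n + T + d')"
    have pd: "\<forall>i. 0 \<le> i \<longrightarrow> i + d < w \<longrightarrow> x i = x (i + d)" using hP by (auto simp: w_def)
    have pd': "\<forall>i. 0 \<le> i \<longrightarrow> i + d' < w \<longrightarrow> x i = x (i + d')"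
      using Qm kn by (auto simp: w_def)
    have Td: "d' - 1 \<le> T" using TT dn n3 by linarith
    have l1: "d + d' - gcd d d' \<le> T + d" using gpos Td by linarith
    have l2: "d + d' - gcd d d' \<le> k - n + T + d'" using gpos fw2 by linarith
    have len: "d + d' - gcd d d' \<le> w - 0" using l1 l2 unfolding w_def by simp
    have "x (d - 1) = x (d' - 1)"
      using fine_wilf[OF _ _ len pd pd', of "d - 1" "d' - 1"] d1 dd fw2 gdvd Td by (auto simp: w_def)
    moreover have "x (-1) = x (-1 + d')" using Qm[of "-1"] fw2 kn d1 by auto
    ultimately show False using bP2 by simp
  next
    case r1b
    have "x T = x (T + d')" using hQ[rule_format, of T] r1b k0 by simp
    also have "\<dots> = x (T + d' + d)" using P1 r1b by auto
    also have "\<dots> = x (T + d)" using hQ[rule_format, of "T + d"] r1b by (simp add: algebra_simps)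
    finally show False using bP1 by simp
  next
    case r2
    have "x (-1) = x (-1 - d')" using Qm[of "-1 - d'"] r2 by simp
    also have "\<dots> = x (-1 - d' + d)" using Pm r2 by auto
    also have "\<dots> = x (-1 + d)" using Qm[of "-1 + d - d'"] r2 by (simp add: algebra_simps)
    finally show False using bP2 by (simp add: algebra_simps)
  next
    case r5
    have "x (d - 1) = x (d - 1 + d)" using hP r5 d1 by auto
    also have "\<dots> = x (2 * d - 1 + d)" using hP[rule_format, of "2 * d - 1"] r5 d1 by (simp add: algebra_simps)
    also have "\<dots> = x (3 * d - 1 + d')" using hQ[rule_format, of "3 * d - 1"] r5 by (simp add: algebra_simps)
    also have "\<dots> = x (-1)" using per[rule_format, of "-1"] r5 by (simp add: algebra_simps)
    finally show False using bP2 by simp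
  qed
qed

lemma core:
  fixes x :: "int \<Rightarrow> 'a" and n d d' T k :: int
  assumes per: "\<forall>i. x (i + n) = x i"
    and n3: "3 \<le> n" and d1: "1 \<le> d" and d1': "1 \<le> d'" and dn: "2 * d \<le> n" and dn': "2 * d' \<le> n"
    and TT: "3 * n \<le> 4 * T + 7" and k0: "0 < k" and kn: "k < n"
    and hP: "\<forall>i. 0 \<le> i \<longrightarrow> i < T \<longrightarrow> x i = x (i + d)"
    and bP1: "x T \<noteq> x (T + d)" and bP2: "x (-1) \<noteq> x (d - 1)"
    and hQ: "\<forall>i. k \<le> i \<longrightarrow> i < k + T \<longrightarrow> x i = x (i + d')"
    and bQ1: "x (k + T) \<noteq> x (k + T + d')" and bQ2: "x (k - 1) \<noteq> x (k - 1 + d')"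
  shows False
proof -
  consider (lt) "d < d'" | (eq) "d = d'" | (gt) "d' < d" by linarith
  then show False
  proof cases
    case lt
    show False by (rule core_lt[OF per n3 d1 lt dn' TT k0 kn hP bP1 bP2 hQ])
  next
    case eq
    have T2: "n - 1 \<le> 2 * T" using TT n3 by smt
    show False
    proof (cases "k \<le> T")
      case True
      then have "x T = x (T + d')" using hQ[rule_format, of T] k0 by simp
      then show False using bP1 eq by simp
    next
      case False
      then have "n \<le> k + T" using T2 by linarith
      then have "x (-1 + n) = x (-1 + n + d')" using hQ[rule_format, of "-1 + n"] kn by simp
      moreover have "x (-1 + n) = x (-1)" using per by blast
      moreover have "x (-1 + n + d') = x (d' - 1)" using per[rule_format, of "d' - 1"] by (simp add: algebra_simps)
      ultimately show False using bP2 eq by simp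
    qed
  next
    case gt
    define y where "y i = x (i + k)" for i
    have pery: "\<forall>i. y (i + n) = y i"
    proof
      fix i show "y (i + n) = y i" using per[rule_format, of "i + k"] by (simp add: y_def algebra_simps)
    qed
    have hPy: "\<forall>i. 0 \<le> i \<longrightarrow> i < T \<longrightarrow> y i = y (i + d')"
      using hQ by (simp add: y_def algebra_simps)
    have bP1y: "y T \<noteq> y (T + d')" using bQ1 by (simp add: y_def algebra_simps)
    have bP2y: "y (-1) \<noteq> y (d' - 1)" using bQ2 by (simp add: y_def algebra_simps)
    have hQy: "\<forall>i. n - k \<le> i \<longrightarrow> i < n - k + T \<longrightarrow> y i = y (i + d)"
    proof (intro allI impI)
      fix i assume a: "n - k \<le> i" "i < n - k + T"
      have "x (i + k - n) = x (i + k - n + d)" using hP a by simp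
      moreover have "x (i + k - n) = x (i + k)" using per[rule_format, of "i + k - n"] by simp
      moreover have "x (i + k - n + d) = x (i + k + d)" using per[rule_format, of "i + k - n + d"] by (simp add: algebra_simps)
      ultimately show "y i = y (i + d)" by (simp add: y_def algebra_simps)
    qed
    show False by (rule core_lt[OF pery n3 d1' gt dn TT _ _ hPy bP1y bP2y hQy]) (use k0 kn in auto)
  qed
qed



lemma concat_replicate_nth:
  "i < q * length u \<Longrightarrow> concat (replicate q u) ! i = u ! (i mod length u)"
proof (induction q arbitrary: i)
  case 0 then show ?case by simp
next
  case (Suc q)
  show ?case
  proof (cases "i < length u")
    case True then show ?thesis by (simp add: nth_append)
  next
    case False
    then have "i - length u < q * length u" using Suc.prems by simp
    then have "concat (replicate q u) ! (i - length u) = u ! ((i - length u) mod length u)"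
      using Suc.IH by blast
    moreover have "(i - length u) mod length u = i mod length u"
      using False by (simp add: le_mod_geq)
    ultimately show ?thesis using False by (simp add: nth_append)
  qed
qed

lemma bd_prefix:
  assumes "s \<in> Bd n c d" "1 \<le> d" "c + d \<le> n"
  shows "\<forall>i < c + d - 1. s ! i = s ! (i mod d)" and "s ! (c + d - 1) \<noteq> s ! ((c + d - 1) mod d)"
proof -
  define q where "q = (c + d - 1) div d"
  define r where "r = c + d - 1 - q * d"
  have len: "length s = n" using assms(1) by (simp add: Bd_def)
  have eq: "take (c + d) s = concat (replicate q (take d s)) @ take r s @ [\<not> s ! r]"
    using assms(1) by (simp add: Bd_def q_def r_def Let_def)
  have rmod: "r = (c + d - 1) mod d" unfolding r_def q_def
    by (metis minus_div_mult_eq_mod)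
  have rd: "r < d" using rmod assms(2) by simp
  have qle: "q * d \<le> c + d - 1" using div_mult_mod_eq[of "c + d - 1" d] unfolding q_def by linarith
  have qr: "q * d + r = c + d - 1" unfolding r_def using qle by simp
  have ltd: "length (take d s) = d" using len assms by simp
  have lcon: "length (concat (replicate q (take d s))) = q * d" using ltd by (simp add: length_concat sum_list_replicate)
  have nth: "s ! i = (concat (replicate q (take d s)) @ take r s @ [\<not> s ! r]) ! i" if "i < c + d" for i
  proof -
    have "s ! i = take (c + d) s ! i" using that len assms by simp
    then show ?thesis using eq by simp
  qed
  show "\<forall>i < c + d - 1. s ! i = s ! (i mod d)"
  proof (intro allI impI)
    fix i assume i: "i < c + d - 1"
    have i1: "i < c + d" using i by simp
    show "s ! i = s ! (i mod d)"
    proof (cases "i < q * d")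
      case True
      have t1: "i < length (concat (replicate q (take d s)))" using True lcon by simp
      have t2: "i < q * length (take d s)" using True ltd by simp
      have md: "i mod d < d" using assms(2) by simp
      have "s ! i = (concat (replicate q (take d s)) @ take r s @ [\<not> s ! r]) ! i" by (rule nth[OF i1])
      also have "\<dots> = concat (replicate q (take d s)) ! i" by (rule nth_append_left[OF t1])
      also have "\<dots> = take d s ! (i mod length (take d s))" by (rule concat_replicate_nth[OF t2])
      also have "\<dots> = take d s ! (i mod d)" by (simp only: ltd)
      also have "\<dots> = s ! (i mod d)" by (rule nth_take[OF md])
      finally show ?thesis .
    next
      case False
      have ir: "i - q * d < r" using i False qr by linarith
      have t1: "length (concat (replicate q (take d s))) \<le> i" using False lcon by simp
      have t3: "i - q * d < length (take r s)" using ir rd len assms(3) by simp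
      have "s ! i = (concat (replicate q (take d s)) @ take r s @ [\<not> s ! r]) ! i" by (rule nth[OF i1])
      also have "\<dots> = (take r s @ [\<not> s ! r]) ! (i - length (concat (replicate q (take d s))))"
        by (rule nth_append_right[OF t1])
      also have "\<dots> = (take r s @ [\<not> s ! r]) ! (i - q * d)" by (simp only: lcon)
      also have "\<dots> = take r s ! (i - q * d)" by (rule nth_append_left[OF t3])
      also have "\<dots> = s ! (i - q * d)" by (rule nth_take[OF ir])
      also have "i - q * d = i mod d"
      proof -
        have "i mod d = (q * d + (i - q * d)) mod d" using False by simp
        also have "\<dots> = (i - q * d) mod d" by (rule mod_mult_self3)
        also have "\<dots> = i - q * d" using ir rd by simp
        finally show ?thesis by simp
      qed
      finally show ?thesis .
    qed
  qed
  have lr: "length (take r s) = r" using rd len assms by simp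
  have "s ! (c + d - 1) = (concat (replicate q (take d s)) @ take r s @ [\<not> s ! r]) ! (q * d + r)"
    using nth[of "c + d - 1"] qr assms(2) by simp
  also have "\<dots> = (\<not> s ! r)"
    using nth_append_length_plus[of "concat (replicate q (take d s))" "take r s @ [\<not> s ! r]" r]
      lcon lr nth_append_length[of "take r s" "\<not> s ! r" "[]"] by simp
  finally have "s ! (c + d - 1) = (\<not> s ! r)" .
  then show "s ! (c + d - 1) \<noteq> s ! ((c + d - 1) mod d)" using rmod by simp
qed

lemma add_facts:
  assumes B: "s \<in> Bd n c d" and d1: "1 \<le> d" and cd: "c + d \<le> n" and c1: "1 \<le> c"
  shows "add_d d s < n \<and> s ! (n - 1 - add_d d s) \<noteq> s ! nat ((int d - 1 - int (add_d d s)) mod int d)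
    \<and> (\<forall>i < add_d d s. s ! (n - 1 - i) = s ! nat ((int d - 1 - int i) mod int d))"
proof -
  have len: "length s = n" using B by (simp add: Bd_def)
  define P where "P t \<longleftrightarrow> t < length s \<and> s ! (length s - 1 - t) \<noteq> s ! nat ((int d - 1 - int t) mod int d)" for t
  have ad: "add_d d s = (LEAST t. P t)" unfolding add_d_def P_def by simp
  note pre = bd_prefix[OF B d1 cd]
  have ex: "\<exists>t. P t"
  proof (rule ccontr)
    assume "\<not> (\<exists>t. P t)"
    then have all: "\<And>t. t < n \<Longrightarrow> s ! (n - 1 - t) = s ! nat ((int d - 1 - int t) mod int d)"
      unfolding P_def len by blast
    have e1: "s ! (c - 1) = s ! nat ((int d - 1 - int (n - c)) mod int d)"
      using all[of "n - c"] c1 cd by (simp add: Suc_diff_le)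
    have e2: "s ! (c + d - 1) = s ! nat ((int d - 1 - int (n - c - d)) mod int d)"
      using all[of "n - c - d"] c1 cd d1 by (simp add: Suc_diff_le)
    have "(int d - 1 - int (n - c - d)) mod int d = ((int d - 1 - int (n - c)) + int d) mod int d"
      using cd by (simp add: of_nat_diff algebra_simps)
    also have "\<dots> = (int d - 1 - int (n - c)) mod int d" by (rule mod_add_self2)
    finally have "s ! (c - 1) = s ! (c + d - 1)" using e1 e2 by simp
    moreover have "s ! (c - 1) = s ! ((c - 1) mod d)" using pre(1) c1 d1 by simp
    moreover have "(c - 1) mod d = (c + d - 1) mod d"
    proof -
      have "c + d - 1 = (c - 1) + 1 * d" using c1 by simp
      then show ?thesis by (metis mod_mult_self1)
    qed
    ultimately show False using pre(2) by simp
  qed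
  have P1: "P (add_d d s)" unfolding ad using ex by (rule LeastI_ex)
  have P2: "\<not> P i" if "i < add_d d s" for i using not_less_Least[of i P] that ad by simp
  show ?thesis
  proof (intro conjI allI impI)
    show "add_d d s < n" using P1 len P_def by simp
    show "s ! (n - 1 - add_d d s) \<noteq> s ! nat ((int d - 1 - int (add_d d s)) mod int d)"
      using P1 len P_def by simp
    fix i assume i: "i < add_d d s"
    then have "i < n" using P1 len P_def by simp
    then show "s ! (n - 1 - i) = s ! nat ((int d - 1 - int i) mod int d)" using P2[OF i] len P_def by simp
  qed
qed

lemma mod_shift_nat: "((a::nat) + b) mod b = a mod b" by simp

lemma bd_unique_lt:
  assumes B1: "s \<in> Bd n c d1" and B2: "s \<in> Bd n c d2" and d1: "1 \<le> d1" and dd: "d1 < d2"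
    and dc: "d2 \<le> c" and cd: "c + d2 \<le> n"
  shows False
proof -
  have cd1: "c + d1 \<le> n" using dd cd by simp
  note p1 = bd_prefix[OF B1 d1 cd1]
  have d2: "1 \<le> d2" using d1 dd by simp
  note p2 = bd_prefix[OF B2 d2 cd]
  define y where "y i = s ! nat i" for i :: int
  have per1: "\<forall>i. 0 \<le> i \<longrightarrow> i + int d1 < int (c + d1 - 1) \<longrightarrow> y i = y (i + int d1)"
  proof (intro allI impI)
    fix i :: int assume a: "0 \<le> i" "i + int d1 < int (c + d1 - 1)"
    have n1: "nat (i + int d1) = nat i + d1" using a by simp
    have "s ! nat i = s ! (nat i mod d1)" using p1(1) a by simp
    moreover have "s ! (nat i + d1) = s ! ((nat i + d1) mod d1)" using p1(1) a by (simp add: nat_less_iff)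
    ultimately show "y i = y (i + int d1)" unfolding y_def n1 by simp
  qed
  have per2: "\<forall>i. 0 \<le> i \<longrightarrow> i + int d2 < int (c + d1 - 1) \<longrightarrow> y i = y (i + int d2)"
  proof (intro allI impI)
    fix i :: int assume a: "0 \<le> i" "i + int d2 < int (c + d1 - 1)"
    have n1: "nat (i + int d2) = nat i + d2" using a by simp
    have "s ! nat i = s ! (nat i mod d2)" using p2(1) a dd by simp
    moreover have "s ! (nat i + d2) = s ! ((nat i + d2) mod d2)" using p2(1) a dd by (simp add: nat_less_iff)
    ultimately show "y i = y (i + int d2)" unfolding y_def n1 by simp
  qed
  have "0 < gcd (int d1) (int d2)" using d1 by simp
  then have g1: "1 \<le> gcd (int d1) (int d2)" by linarith
  have len: "int d1 + int d2 - gcd (int d1) (int d2) \<le> int (c + d1 - 1) - 0" using g1 dc d1 by simp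
  have "y (int (c + d1 - 1 - d2)) = y (int (c - 1))"
    by (rule fine_wilf[OF _ _ len per1 per2]) (use d1 dd dc in auto)
  then have e: "s ! (c + d1 - 1 - d2) = s ! (c - 1)" unfolding y_def by simp
  have "s ! (c + d1 - 1) = s ! ((c + d1 - 1) mod d2)" using p2(1)[rule_format, of "c + d1 - 1"] dd d1 by simp
  also have "(c + d1 - 1) mod d2 = (c + d1 - 1 - d2) mod d2"
  proof -
    have "c + d1 - 1 = (c + d1 - 1 - d2) + d2" using dc d1 by simp
    then show ?thesis by (metis mod_shift_nat)
  qed
  also have "s ! \<dots> = s ! (c + d1 - 1 - d2)" using p2(1) dd dc by simp
  also have "\<dots> = s ! ((c - 1) mod d1)" using e p1(1) d1 dc dd by simp
  also have "(c - 1) mod d1 = (c + d1 - 1) mod d1"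
  proof -
    have "c + d1 - 1 = (c - 1) + d1" using dc dd d1 by simp
    then show ?thesis by (metis mod_shift_nat)
  qed
  finally show False using p1(2) by simp
qed

lemma bd_unique:
  assumes "s \<in> Bd n c d1" "s \<in> Bd n c d2" "1 \<le> d1" "1 \<le> d2"
    "d1 \<le> c" "d2 \<le> c" "c + d1 \<le> n" "c + d2 \<le> n"
  shows "d1 = d2"
proof (rule ccontr)
  assume "d1 \<noteq> d2"
  then consider "d1 < d2" | "d2 < d1" by linarith
  then show False
  proof cases
    case 1 then show False using bd_unique_lt[of s n c d1 d2] assms by blast
  next
    case 2 then show False using bd_unique_lt[of s n c d2 d1] assms by blast
  qed
qed

lemma mod_neg_small: "(0::int) < n \<Longrightarrow> -n \<le> j \<Longrightarrow> j < 0 \<Longrightarrow> j mod n = j + n"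
proof -
  assume a: "0 < n" "-n \<le> j" "j < 0"
  have "(j + n) mod n = j + n" by (rule mod_pos_pos_trivial) (use a in auto)
  moreover have "(j + n) mod n = j mod n" by (rule mod_add_self2)
  ultimately show ?thesis by simp
qed

lemma seq_facts:
  assumes B: "s \<in> Bd n c d" and d1: "1 \<le> d" and cd: "c + d \<le> n" and c1: "1 \<le> c"
    and t_def: "t = add_d d s"
    and X_def: "X = (\<lambda>i::int. s ! nat ((i - int t) mod int n))"
  shows "(\<forall>i. 0 \<le> i \<longrightarrow> i < int t + int c - 1 \<longrightarrow> X i = X (i + int d))
    \<and> X (int t + int c - 1) \<noteq> X (int t + int c - 1 + int d) \<and> X (-1) \<noteq> X (int d - 1)"
proof -
  note af = add_facts[OF B d1 cd c1, folded t_def]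
  note pre = bd_prefix[OF B d1 cd]
  define f where "f j = s ! nat (j mod int n)" for j :: int
  have Xf: "X i = f (i - int t)" for i unfolding X_def f_def by simp
  have npos: "0 < int n" using cd d1 by simp
  have K: "f j = s ! nat (j mod int d)" if j1: "- int t \<le> j" and j2: "j < int c + int d - 1" for j
  proof (cases "0 \<le> j")
    case True
    have jn: "j mod int n = j" using True j2 cd by (simp add: mod_pos_pos_trivial)
    have lt: "nat j < c + d - 1" using j2 True by linarith
    have "f j = s ! nat j" unfolding f_def jn by simp
    also have "\<dots> = s ! (nat j mod d)" using pre(1) lt by simp
    also have "nat j mod d = nat (j mod int d)" using True by (simp add: nat_mod_distrib)
    finally show ?thesis .
  next
    case False
    define i where "i = nat (-1 - j)"
    have ij: "j = -1 - int i" using False by (simp add: i_def)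
    have it: "i < t" using j1 False ij by linarith
    have tn: "t < n" using af by simp
    have jm: "j mod int n = j + int n" using mod_neg_small[OF npos] False ij it tn by simp
    have "nat (j mod int n) = n - 1 - i" using jm ij it tn by simp
    then have "f j = s ! (n - 1 - i)" unfolding f_def by simp
    also have "\<dots> = s ! nat ((int d - 1 - int i) mod int d)" using af it by simp
    also have "(int d - 1 - int i) mod int d = j mod int d"
    proof -
      have eq: "int d - 1 - int i = j + int d" using ij by simp
      show ?thesis unfolding eq by (rule mod_add_self2)
    qed
    finally show ?thesis .
  qed
  have hP: "\<forall>i. 0 \<le> i \<longrightarrow> i < int t + int c - 1 \<longrightarrow> X i = X (i + int d)"
  proof (intro allI impI)
    fix i :: int assume a: "0 \<le> i" "i < int t + int c - 1"
    have "X i = s ! nat ((i - int t) mod int d)" unfolding Xf using K a by simp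
    moreover have "X (i + int d) = s ! nat ((i - int t + int d) mod int d)"
      unfolding Xf using K[of "i + int d - int t"] a by (simp add: algebra_simps)
    ultimately show "X i = X (i + int d)" by simp
  qed
  have bP1: "X (int t + int c - 1) \<noteq> X (int t + int c - 1 + int d)"
  proof -
    have e1: "X (int t + int c - 1) = s ! (c - 1)"
    proof -
      have m: "(int c - 1) mod int n = int c - 1" using c1 cd d1 by (simp add: mod_pos_pos_trivial)
      have nn: "nat (int c - 1) = c - 1" using c1 by arith
      have "X (int t + int c - 1) = f (int c - 1)" unfolding Xf by simp
      also have "\<dots> = s ! (c - 1)" unfolding f_def m nn by simp
      finally show ?thesis .
    qed
    have e2: "X (int t + int c - 1 + int d) = s ! (c + d - 1)"
    proof -
      have m: "(int c + int d - 1) mod int n = int c + int d - 1" using c1 cd d1 by (simp add: mod_pos_pos_trivial)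
      have nn: "nat (int c + int d - 1) = c + d - 1" using c1 by arith
      have "X (int t + int c - 1 + int d) = f (int c + int d - 1)" unfolding Xf by (simp add: algebra_simps)
      also have "\<dots> = s ! (c + d - 1)" unfolding f_def m nn by simp
      finally show ?thesis .
    qed
    have "s ! (c - 1) = s ! ((c - 1) mod d)" using pre(1) c1 d1 by simp
    moreover have "(c - 1) mod d = (c + d - 1) mod d"
    proof -
      have "c + d - 1 = (c - 1) + d" using c1 by simp
      then show ?thesis by (metis mod_shift_nat)
    qed
    ultimately show ?thesis using pre(2) e1 e2 by simp
  qed
  have bP2: "X (-1) \<noteq> X (int d - 1)"
  proof -
    have tn: "t < n" using af by simp
    have m: "(-1 - int t) mod int n = -1 - int t + int n" using mod_neg_small[OF npos, of "-1 - int t"] tn by simp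
    have nn: "nat (-1 - int t + int n) = n - 1 - t" using tn by arith
    have "X (-1) = f (-1 - int t)" unfolding Xf by simp
    also have "\<dots> = s ! (n - 1 - t)" unfolding f_def m nn by simp
    finally have e1: "X (-1) = s ! (n - 1 - t)" .
    have "X (int d - 1) = f (int d - 1 - int t)" unfolding Xf by simp
    also have "\<dots> = s ! nat ((int d - 1 - int t) mod int d)" using K[of "int d - 1 - int t"] d1 c1 by simp
    finally have e2: "X (int d - 1) = s ! nat ((int d - 1 - int t) mod int d)" .
    show ?thesis using e1 e2 af by simp
  qed
  show ?thesis using hP bP1 bP2 by blast
qed

lemma rshift_nth:
  assumes "length s = n" "k < n" "j < n"
  shows "rshift k s ! j = s ! ((j + n - k) mod n)"
proof (cases "j < k")
  case True
  have l: "length (drop (n - k) s) = k" using assms by simp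
  have "rshift k s ! j = drop (n - k) s ! j" unfolding rshift_def using assms(1) nth_append_left[of j "drop (n - k) s"] l True by simp
  also have "\<dots> = s ! (n - k + j)" using assms True by simp
  also have "n - k + j = (j + n - k) mod n" using True assms by simp
  finally show ?thesis .
next
  case False
  have l: "length (drop (n - k) s) = k" using assms by simp
  have "rshift k s ! j = take (n - k) s ! (j - k)" unfolding rshift_def using assms(1) nth_append_right[of "drop (n - k) s" j] l False by simp
  also have "\<dots> = s ! (j - k)" using assms False by simp
  also have "j - k = (j + n - k) mod n"
  proof -
    have "j + n - k = (j - k) + n" using False assms by simp
    then show ?thesis using assms by (metis mod_shift_nat mod_less diff_less_eq le_less_trans not_less less_imp_diff_less)
  qed
  finally show ?thesis .
qed

lemma shift_rel:
  assumes "length s = n" "k < n" "0 < n"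
  shows "rshift k s ! nat ((i - int t) mod int n) = s ! nat ((i - int k - int t) mod int n)"
proof -
  define j where "j = nat ((i - int t) mod int n)"
  have ij: "int j = (i - int t) mod int n" using assms by (simp add: j_def)
  have "(i - int t) mod int n < int n" using assms by simp
  then have jn: "j < n" using ij by linarith
  have "int ((j + n - k) mod n) = (int j + int n - int k) mod int n"
    using assms by (simp add: of_nat_mod of_nat_diff)
  also have "\<dots> = ((i - int t) mod int n + (int n - int k)) mod int n" using ij by (simp add: algebra_simps)
  also have "\<dots> = (i - int t + (int n - int k)) mod int n" by (rule mod_add_left_eq)
  also have "\<dots> = ((i - int k - int t) + int n) mod int n" by (simp add: algebra_simps)
  also have "\<dots> = (i - int k - int t) mod int n" by (rule mod_add_self2)
  finally have "(j + n - k) mod n = nat ((i - int k - int t) mod int n)" by linarith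
  then show ?thesis using rshift_nth[OF assms(1,2) jn] j_def by simp
qed

lemma c_props:
  assumes "n \<ge> 3" "c = (n + 1) div 2" "d \<in> drange n c"
  shows "1 \<le> d" "c + d \<le> n" "d \<le> c" "2 * d \<le> n" "2 \<le> c"
  using assms by (auto simp: drange_def)

lemma add_eq:
  assumes n3: "n \<ge> 3" and c: "c = (n + 1) div 2" and dr: "d \<in> drange n c" and B: "s \<in> Bd n c d"
  shows "add n c s = add_d d s"
proof -
  note cp = c_props[OF n3 c dr]
  have "(THE d. d \<in> drange n c \<and> s \<in> Bd n c d) = d"
  proof (rule the_equality)
    show "d \<in> drange n c \<and> s \<in> Bd n c d" using dr B by simp
    fix d2 assume a: "d2 \<in> drange n c \<and> s \<in> Bd n c d2"
    note cp2 = c_props[OF n3 c, of d2]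
    show "d2 = d" using bd_unique[of s n c d2 d] a cp cp2 B by auto
  qed
  then show ?thesis unfolding add_def by simp
qed

theorem lemma9:
  fixes n \<omega> :: nat
  assumes "n \<ge> 3" and "\<omega> \<ge> (3 * n) div 4"
  defines "c \<equiv> (n + 1) div 2"
  shows "\<forall>s\<in>{s \<in> Rset n c. int (add n c s) = int \<omega> - int c}.
         \<forall>s'\<in>{s \<in> Rset n c. int (add n c s) = int \<omega> - int c}.
           s \<noteq> s' \<longrightarrow> \<not> (\<exists>k<n. s' = rshift k s)"
proof (intro ballI impI notI)
  fix s s'
  assume S: "s \<in> {s \<in> Rset n c. int (add n c s) = int \<omega> - int c}"
    and S': "s' \<in> {s \<in> Rset n c. int (add n c s) = int \<omega> - int c}"
    and ne: "s \<noteq> s'" and ex: "\<exists>k<n. s' = rshift k s"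
  have n3: "n \<ge> 3" using assms(1) .
  have cdef: "c = (n + 1) div 2" using c_def by simp
  obtain k where k: "k < n" "s' = rshift k s" using ex by blast
  have "s \<in> Bc n c" using S by (simp add: Rset_def)
  then obtain d where dr: "d \<in> drange n c" and B: "s \<in> Bd n c d" by (auto simp: Bc_def)
  have "s' \<in> Bc n c" using S' by (simp add: Rset_def)
  then obtain d' where dr': "d' \<in> drange n c" and B': "s' \<in> Bd n c d'" by (auto simp: Bc_def)
  note cp = c_props[OF n3 cdef dr]
  note cp' = c_props[OF n3 cdef dr']
  have c1: "1 \<le> c" using cp by simp
  define t where "t = add_d d s"
  define t' where "t' = add_d d' s'"
  have tt: "t = t'" using S S' add_eq[OF n3 cdef dr B] add_eq[OF n3 cdef dr' B'] by (simp add: t_def t'_def)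
  have lens: "length s = n" using B by (simp add: Bd_def)
  have k0: "k \<noteq> 0"
  proof
    assume "k = 0"
    then have "s' = s" using k lens by (simp add: rshift_def)
    then show False using ne by simp
  qed
  define X where "X = (\<lambda>i::int. s ! nat ((i - int t) mod int n))"
  define X' where "X' = (\<lambda>i::int. s' ! nat ((i - int t) mod int n))"
  have sf: "(\<forall>i. 0 \<le> i \<longrightarrow> i < int t + int c - 1 \<longrightarrow> X i = X (i + int d))
    \<and> X (int t + int c - 1) \<noteq> X (int t + int c - 1 + int d) \<and> X (-1) \<noteq> X (int d - 1)"
    by (rule seq_facts[OF B cp(1) cp(2) c1 t_def X_def])
  have sf': "(\<forall>i. 0 \<le> i \<longrightarrow> i < int t + int c - 1 \<longrightarrow> X' i = X' (i + int d'))
    \<and> X' (int t + int c - 1) \<noteq> X' (int t + int c - 1 + int d') \<and> X' (-1) \<noteq> X' (int d' - 1)"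
    by (rule seq_facts[OF B' cp'(1) cp'(2) c1 _ X'_def]) (simp add: tt t'_def)
  have npos: "0 < n" using n3 by simp
  have rel: "X' i = X (i - int k)" for i
    unfolding X'_def X_def using shift_rel[OF lens k(1) npos, of i t] k(2) by simp
  have perX: "X (i + int n) = X i" for i
  proof -
    have "(i + int n - int t) mod int n = ((i - int t) + int n) mod int n" by (simp add: algebra_simps)
    also have "\<dots> = (i - int t) mod int n" by (rule mod_add_self2)
    finally show ?thesis unfolding X_def by simp
  qed
  have perX': "X i = X (i - int n)" for i using perX[of "i - int n"] by simp
  define T where "T = int t + int c - 1"
  have hQ: "\<forall>i. int n - int k \<le> i \<longrightarrow> i < int n - int k + T \<longrightarrow> X i = X (i + int d')"
  proof (intro allI impI)
    fix i assume a: "int n - int k \<le> i" "i < int n - int k + T"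
    have "X' (i + int k - int n) = X' (i + int k - int n + int d')" using sf' a T_def by simp
    then show "X i = X (i + int d')" using rel[of "i + int k - int n"] rel[of "i + int k - int n + int d'"]
      perX'[of i] perX'[of "i + int d'"] by (simp add: algebra_simps)
  qed
  have bQ1: "X (int n - int k + T) \<noteq> X (int n - int k + T + int d')"
    using sf' rel[of T] rel[of "T + int d'"] perX'[of "int n - int k + T"] perX'[of "int n - int k + T + int d'"]
    by (simp add: T_def algebra_simps)
  have bQ2: "X (int n - int k - 1) \<noteq> X (int n - int k - 1 + int d')"
    using sf' rel[of "-1"] rel[of "int d' - 1"] perX'[of "int n - int k - 1"] perX'[of "int n - int k - 1 + int d'"]
    by (simp add: algebra_simps)
  have TT: "3 * int n \<le> 4 * T + 7"
  proof -
    have "int t = int \<omega> - int c" using S add_eq[OF n3 cdef dr B] t_def by simp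
    moreover have "4 * ((3 * n) div 4) + 3 \<ge> 3 * n" by linarith
    ultimately show ?thesis using assms(2) T_def by linarith
  qed
  show False
  proof (rule core[of X "int n" "int d" "int d'" T "int n - int k"])
    show "\<forall>i. X (i + int n) = X i" using perX by blast
    show "3 \<le> int n" using n3 by simp
    show "1 \<le> int d" "1 \<le> int d'" "2 * int d \<le> int n" "2 * int d' \<le> int n" using cp cp' by simp_all
    show "3 * int n \<le> 4 * T + 7" by (rule TT)
    show "0 < int n - int k" "int n - int k < int n" using k k0 by simp_all
    show "\<forall>i. 0 \<le> i \<longrightarrow> i < T \<longrightarrow> X i = X (i + int d)" using sf T_def by simp
    show "X T \<noteq> X (T + int d)" using sf T_def by simp
    show "X (-1) \<noteq> X (int d - 1)" using sf by simp
    show "\<forall>i. int n - int k \<le> i \<longrightarrow> i < int n - int k + T \<longrightarrow> X i = X (i + int d')" by (rule hQ)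
    show "X (int n - int k + T) \<noteq> X (int n - int k + T + int d')" by (rule bQ1)
    show "X (int n - int k - 1) \<noteq> X (int n - int k - 1 + int d')" by (rule bQ2)
  qed
qed


end
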